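(* There is no LCL problem on cycles with mending radius between $\omega(1)$ and $o(n)$: if an LCL problem $\Pi$ on the family of all cycles is $T$-mendable for some function $T$ with $T(n)=o(n)$, then $\Pi$ is $T'$-mendable for some constant function $T'$.
   Context: A locally verifiable problem $\Pi$ on a graph family $\mathcal{G}$ is given by a set $\Sigma$ of input labels, a set $\Gamma$ of output labels and a verifier $\psi$ with verification radius $r$: $\psi(G,\lambda,v)\in\{\text{happy},\text{unhappy}\}$ depends only on the radius-$r$ neighborhood of $v$ (structure, inputs and outputs, up to isomorphism); $\lambda:V\to\Gamma$ is a solution if $\psi$ is happy everywhere. $\Pi$ is an LCL problem if $\Sigma,\Gamma$ are finite and all graphs in $\mathcal{G}$ have maximum degree bounded by a constant. Partial labelings are maps $\lambda:V\to\Gamma\cup\{\bot\}$; the relaxed verifier $\psi^*$ is happy at $v$ if some node within distance $r$ of $v$ has label $\bot$, and otherwise $\psi^*(G,\lambda,v)=\psi(G,\lambda',v)$ for any $\lambda':V\to\Gamma$ agreeing with $\lambda$ on the radius-$r$ neighborhood of $v$; $\psi^*$ accepts $\lambda$ if happy everywhere. Given $\lambda$ accepted by $\psi^*$ and node $v$, a $t$-mend of $\lambda$ at $v$ is a partial labeling $\mu$ accepted by $\psi^*$ with $\mu(v)\neq\bot$, $\mu(u)=\bot\Rightarrow\lambda(u)=\bot$, and $\mu(u)\neq\lambda(u)\Rightarrow\mathrm{dist}(u,v)\le t$. A verifier is $T$-mendable if for every $G\in\mathcal{G}$ with $n$ nodes, every $\lambda$ accepted by $\psi^*$ and every node $v$,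 a $T(n)$-mend at $v$ exists; $\Pi$ is $T$-mendable if some radius-$r$ verifier for $\Pi$ (accepting exactly the solutions of $\Pi$) is $T$-mendable. *)

theory Defs
  imports Complex_Main "HOL-Library.Landau_Symbols"
begin

type_synonym graph = "nat set \<times> (nat \<times> nat) set"

definition verts :: "graph \<Rightarrow> nat set" where "verts G = fst G"
definition edges :: "graph \<Rightarrow> (nat \<times> nat) set" where "edges G = snd G"

definition is_cycle :: "graph \<Rightarrow> bool" where
  "is_cycle G \<longleftrightarrow> (\<exists>n g. n \<ge> 3 \<and> bij_betw g {0..<n} (verts G) \<and>
     edges G = {(g i, g (Suc i mod n)) | i. i < n} \<union> {(g (Suc i mod n), g i) | i. i < n})"

definition dist_le :: "graph \<Rightarrow> nat \<Rightarrow> nat \<Rightarrow> real \<Rightarrow> bool" where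
  "dist_le G v u t \<longleftrightarrow> v \<in> verts G \<and> (\<exists>k::nat. real k \<le> t \<and> (v, u) \<in> (edges G) ^^ k)"

definition ball :: "graph \<Rightarrow> nat \<Rightarrow> nat \<Rightarrow> nat set" where
  "ball G v r = {u. dist_le G v u (real r)}"

definition ball_iso ::
  "nat \<Rightarrow> graph \<Rightarrow> (nat \<Rightarrow> 'i) \<Rightarrow> (nat \<Rightarrow> 'l) \<Rightarrow> nat \<Rightarrow>
          graph \<Rightarrow> (nat \<Rightarrow> 'i) \<Rightarrow> (nat \<Rightarrow> 'l) \<Rightarrow> nat \<Rightarrow> (nat \<Rightarrow> nat) \<Rightarrow> bool" where
  "ball_iso r G inp lam v G' inp' lam' v' f \<longleftrightarrow>
     bij_betw f (ball G v r) (ball G' v' r) \<and> f v = v' \<and>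
     (\<forall>x\<in>ball G v r. \<forall>y\<in>ball G v r. (x, y) \<in> edges G \<longleftrightarrow> (f x, f y) \<in> edges G') \<and>
     (\<forall>x\<in>ball G v r. inp' (f x) = inp x \<and> lam' (f x) = lam x)"

text \<open>A verifier: happy (True) / unhappy (False) at a node, given graph, inputs, outputs.\<close>
type_synonym ('i, 'o) verifier = "graph \<Rightarrow> (nat \<Rightarrow> 'i) \<Rightarrow> (nat \<Rightarrow> 'o) \<Rightarrow> nat \<Rightarrow> bool"

definition local_verifier :: "nat \<Rightarrow> ('i, 'o) verifier \<Rightarrow> bool" where
  "local_verifier r \<psi> \<longleftrightarrow>
     (\<forall>G G' inp inp' lam lam' v v' f.
        is_cycle G \<and> is_cycle G' \<and> v \<in> verts G \<and> v' \<in> verts G' \<and>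
        ball_iso r G inp lam v G' inp' lam' v' f \<longrightarrow> \<psi> G inp lam v = \<psi> G' inp' lam' v')"

text \<open>Relaxed verifier on partial labelings (None = bottom).\<close>
definition relaxed :: "nat \<Rightarrow> ('i, 'o) verifier \<Rightarrow> graph \<Rightarrow> (nat \<Rightarrow> 'i) \<Rightarrow> (nat \<Rightarrow> 'o option) \<Rightarrow> nat \<Rightarrow> bool" where
  "relaxed r \<psi> G inp \<mu> v \<longleftrightarrow>
     (\<exists>u\<in>ball G v r. \<mu> u = None) \<or>
     (\<forall>lam'. (\<forall>u\<in>ball G v r. \<mu> u = Some (lam' u)) \<longrightarrow> \<psi> G inp lam' v)"

definition accepts_relaxed :: "nat \<Rightarrow> ('i, 'o) verifier \<Rightarrow> graph \<Rightarrow> (nat \<Rightarrow> 'i) \<Rightarrow> (nat \<Rightarrow> 'o option) \<Rightarrow> bool" where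
  "accepts_relaxed r \<psi> G inp \<mu> \<longleftrightarrow> (\<forall>v\<in>verts G. relaxed r \<psi> G inp \<mu> v)"

definition is_mend :: "nat \<Rightarrow> ('i, 'o) verifier \<Rightarrow> graph \<Rightarrow> (nat \<Rightarrow> 'i) \<Rightarrow> (nat \<Rightarrow> 'o option) \<Rightarrow>
                       nat \<Rightarrow> real \<Rightarrow> (nat \<Rightarrow> 'o option) \<Rightarrow> bool" where
  "is_mend r \<psi> G inp lam v t \<mu> \<longleftrightarrow>
     accepts_relaxed r \<psi> G inp \<mu> \<and> \<mu> v \<noteq> None \<and>
     (\<forall>u\<in>verts G. \<mu> u = None \<longrightarrow> lam u = None) \<and>
     (\<forall>u\<in>verts G. \<mu> u \<noteq> lam u \<longrightarrow> dist_le G v u t)"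

definition mendable_verifier :: "nat \<Rightarrow> ('i, 'o) verifier \<Rightarrow> (nat \<Rightarrow> real) \<Rightarrow> bool" where
  "mendable_verifier r \<psi> T \<longleftrightarrow>
     (\<forall>G inp lam v. is_cycle G \<and> accepts_relaxed r \<psi> G inp lam \<and> v \<in> verts G \<longrightarrow>
        (\<exists>\<mu>. is_mend r \<psi> G inp lam v (T (card (verts G))) \<mu>))"

text \<open>A problem is given by its set of solutions (graph, inputs, outputs).\<close>
type_synonym ('i, 'o) problem = "graph \<Rightarrow> (nat \<Rightarrow> 'i) \<Rightarrow> (nat \<Rightarrow> 'o) \<Rightarrow> bool"

definition verifier_for :: "nat \<Rightarrow> ('i, 'o) verifier \<Rightarrow> ('i, 'o) problem \<Rightarrow> bool" where
  "verifier_for r \<psi> \<Pi> \<longleftrightarrow> local_verifier r \<psi> \<and>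
     (\<forall>G inp lam. is_cycle G \<longrightarrow> (\<Pi> G inp lam \<longleftrightarrow> (\<forall>v\<in>verts G. \<psi> G inp lam v)))"

text \<open>LCL on cycles: finite label sets are enforced by the class finite on the label types;
  degree is 2 on cycles.\<close>
definition is_LCL :: "('i::finite, 'o::finite) problem \<Rightarrow> bool" where
  "is_LCL \<Pi> \<longleftrightarrow> (\<exists>r \<psi>. verifier_for r \<psi> \<Pi>)"

definition problem_mendable :: "('i, 'o) problem \<Rightarrow> (nat \<Rightarrow> real) \<Rightarrow> bool" where
  "problem_mendable \<Pi> T \<longleftrightarrow> (\<exists>r \<psi>. verifier_for r \<psi> \<Pi> \<and> mendable_verifier r \<psi> T)"

end

theory Submission
  imports Defs
begin

definition cyc :: "graph \<Rightarrow> nat \<Rightarrow> (nat \<Rightarrow> nat) \<Rightarrow> bool" where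
  "cyc G n g \<longleftrightarrow> n \<ge> 3 \<and> bij_betw g {0..<n} (verts G) \<and>
     edges G = {(g i, g (Suc i mod n)) | i. i < n} \<union> {(g (Suc i mod n), g i) | i. i < n}"

definition pos :: "(nat \<Rightarrow> nat) \<Rightarrow> nat \<Rightarrow> int \<Rightarrow> nat" where
  "pos g m i = g (nat (i mod int m))"

lemma is_cycle_iff: "is_cycle G \<longleftrightarrow> (\<exists>m g. cyc G m g)"
  unfolding is_cycle_def cyc_def by (rule refl)

lemma is_cycle_cyc: "is_cycle G \<Longrightarrow> \<exists>m g. cyc G m g"
  using is_cycle_iff by blast

lemma cyc_card: "cyc G m g \<Longrightarrow> card (verts G) = m"
proof -
  assume "cyc G m g"
  then have "bij_betw g {0..<m} (verts G)" by (simp add: cyc_def)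
  then have "card {0..<m} = card (verts G)" by (rule bij_betw_same_card)
  then show ?thesis by simp
qed

lemma pos_verts: "cyc G m g \<Longrightarrow> pos g m i \<in> verts G"
proof -
  assume c: "cyc G m g"
  then have "m > 0" by (simp add: cyc_def)
  then have "nat (i mod int m) \<in> {0..<m}" by (simp add: nat_less_iff)
  then show ?thesis using c unfolding cyc_def pos_def bij_betw_def by blast
qed

lemma verts_pos: "cyc G m g \<Longrightarrow> x \<in> verts G \<Longrightarrow> \<exists>s. x = pos g m (a + s)"
proof -
  assume c: "cyc G m g" and x: "x \<in> verts G"
  have "x \<in> g ` {0..<m}" using c x by (simp add: cyc_def bij_betw_def)
  then obtain k where k: "k < m" "x = g k" by auto
  have "pos g m (a + (int k - a)) = g k" using k by (simp add: pos_def)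
  then show ?thesis using k(2) by (intro exI[of _ "int k - a"]) simp
qed

lemma pos_cong: "a mod int m = b mod int m \<Longrightarrow> pos g m a = pos g m b"
  by (simp add: pos_def)

lemma pos_eq_mod: "cyc G m g \<Longrightarrow> pos g m a = pos g m b \<Longrightarrow> a mod int m = b mod int m"
proof -
  assume c: "cyc G m g" and e: "pos g m a = pos g m b"
  then have m: "m > 0" by (simp add: cyc_def)
  have "nat (a mod int m) \<in> {0..<m}" "nat (b mod int m) \<in> {0..<m}" using m by (simp_all add: nat_less_iff)
  moreover have "inj_on g {0..<m}" using c by (simp add: cyc_def bij_betw_def)
  ultimately have "nat (a mod int m) = nat (b mod int m)" using e unfolding pos_def inj_on_def by blast
  moreover have "a mod int m \<ge> 0" "b mod int m \<ge> 0" using m by simp_all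
  ultimately show ?thesis by (metis nat_0_le)
qed

lemma pos_inj_small: "cyc G m g \<Longrightarrow> \<bar>a - b\<bar> < int m \<Longrightarrow> pos g m a = pos g m b \<Longrightarrow> a = b"
proof -
  assume c: "cyc G m g" and s: "\<bar>a - b\<bar> < int m" and e: "pos g m a = pos g m b"
  have "a mod int m = b mod int m" using pos_eq_mod[OF c e] .
  then have "int m dvd (a - b)" by (simp add: mod_eq_dvd_iff)
  then obtain q where q: "a - b = int m * q" by (auto elim: dvdE)
  have "q = 0"
  proof (rule ccontr)
    assume "q \<noteq> 0"
    then have "1 \<le> \<bar>q\<bar>" by linarith
    then have "\<bar>int m * q\<bar> \<ge> int m" 
      by (metis abs_mult abs_of_nat mult.right_neutral mult_left_mono of_nat_0_le_iff)
    then show False using s q by simp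
  qed
  then show ?thesis using q by simp
qed

lemma edges_pos: "cyc G m g \<Longrightarrow>
   (x, y) \<in> edges G \<longleftrightarrow> (\<exists>j. (x = pos g m j \<and> y = pos g m (j + 1)) \<or> (x = pos g m (j + 1) \<and> y = pos g m j))"
proof -
  assume c: "cyc G m g"
  then have m: "m > 0" by (simp add: cyc_def)
  have A: "g i = pos g m (int i) \<and> g (Suc i mod m) = pos g m (int i + 1)" if "i < m" for i
  proof -
    have "int (Suc i mod m) = (int i + 1) mod int m" by (metis add.commute of_nat_Suc zmod_int)
    then have "Suc i mod m = nat ((int i + 1) mod int m)" by linarith
    then show ?thesis using that unfolding pos_def by simp
  qed
  have B: "\<exists>i<m. pos g m j = g i \<and> pos g m (j + 1) = g (Suc i mod m)" for j
  proof -
    define i where "i = nat (j mod int m)"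
    have "i < m" using m by (simp add: i_def nat_less_iff)
    moreover have "pos g m j = g i" by (simp add: pos_def i_def)
    moreover have "int (Suc i mod m) = (j + 1) mod int m"
      using m by (simp add: i_def zmod_int mod_add_right_eq add.commute)
    then have "Suc i mod m = nat ((j + 1) mod int m)" by linarith
    then have "pos g m (j + 1) = g (Suc i mod m)" by (simp add: pos_def)
    ultimately show ?thesis by blast
  qed
  have E: "edges G = {(g i, g (Suc i mod m)) | i. i < m} \<union> {(g (Suc i mod m), g i) | i. i < m}"
    using c by (simp add: cyc_def)
  show ?thesis
  proof
    assume "(x, y) \<in> edges G"
    then show "\<exists>j. (x = pos g m j \<and> y = pos g m (j + 1)) \<or> (x = pos g m (j + 1) \<and> y = pos g m j)"
      unfolding E using A by blast
  next
    assume "\<exists>j. (x = pos g m j \<and> y = pos g m (j + 1)) \<or> (x = pos g m (j + 1) \<and> y = pos g m j)"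
    then show "(x, y) \<in> edges G" unfolding E using B by blast
  qed
qed

lemma mod_shift: "a mod (k::int) = b mod k \<Longrightarrow> (a + c) mod k = (b + c) mod k"
  by (metis mod_add_left_eq)

lemma edge_from: "cyc G m g \<Longrightarrow> (pos g m a, y) \<in> edges G \<Longrightarrow> y = pos g m (a + 1) \<or> y = pos g m (a - 1)"
proof -
  assume c: "cyc G m g" and e: "(pos g m a, y) \<in> edges G"
  then obtain j where "(pos g m a = pos g m j \<and> y = pos g m (j + 1)) \<or> (pos g m a = pos g m (j + 1) \<and> y = pos g m j)"
    using edges_pos[OF c] by blast
  then show ?thesis
  proof
    assume h: "pos g m a = pos g m j \<and> y = pos g m (j + 1)"
    then have "a mod int m = j mod int m" using pos_eq_mod[OF c] by blast
    then have "(a + 1) mod int m = (j + 1) mod int m" by (rule mod_shift)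
    then show ?thesis using h pos_cong by metis
  next
    assume h: "pos g m a = pos g m (j + 1) \<and> y = pos g m j"
    then have "a mod int m = (j + 1) mod int m" using pos_eq_mod[OF c] by blast
    then have "(a + (-1)) mod int m = (j + 1 + (-1)) mod int m" by (rule mod_shift)
    then show ?thesis using h pos_cong by (metis add_diff_cancel_right' diff_minus_eq_add minus_minus)
  qed
qed

lemma edge_mk: "cyc G m g \<Longrightarrow> (pos g m a, pos g m (a + 1)) \<in> edges G \<and> (pos g m a, pos g m (a - 1)) \<in> edges G"
proof -
  assume c: "cyc G m g"
  have 1: "(pos g m a, pos g m (a + 1)) \<in> edges G" using edges_pos[OF c] by blast
  have "(pos g m ((a - 1) + 1), pos g m (a - 1)) \<in> edges G" using edges_pos[OF c] by blast
  then show ?thesis using 1 by simp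
qed

lemma pow_pos: "cyc G m g \<Longrightarrow> (pos g m a, y) \<in> edges G ^^ k \<Longrightarrow> \<exists>d. \<bar>d\<bar> \<le> int k \<and> y = pos g m (a + d)"
proof (induction k arbitrary: y)
  case 0
  then show ?case by (intro exI[of _ 0]) simp
next
  case (Suc k)
  from Suc.prems(2) obtain z where z: "(pos g m a, z) \<in> edges G ^^ k" "(z, y) \<in> edges G"
    by (auto elim: relpow_Suc_E)
  obtain d where d: "\<bar>d\<bar> \<le> int k" "z = pos g m (a + d)" using Suc.IH[OF Suc.prems(1) z(1)] by blast
  have "y = pos g m (a + d + 1) \<or> y = pos g m (a + d - 1)" using edge_from[OF Suc.prems(1)] z(2) d(2) by blast
  then show ?case
  proof
    assume "y = pos g m (a + d + 1)"
    then show ?case using d(1) by (intro exI[of _ "d + 1"]) (simp add: add.assoc)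
  next
    assume "y = pos g m (a + d - 1)"
    then show ?case using d(1) by (intro exI[of _ "d - 1"]) (simp add: add_diff_eq)
  qed
qed

lemma pos_pow: "cyc G m g \<Longrightarrow> (pos g m a, pos g m (a + int n)) \<in> edges G ^^ n \<and> (pos g m a, pos g m (a - int n)) \<in> edges G ^^ n"
proof (induction n)
  case 0
  then show ?case by simp
next
  case (Suc n)
  have e1: "(pos g m (a + int n), pos g m (a + int n + 1)) \<in> edges G" using edge_mk[OF Suc.prems] by blast
  have e2: "(pos g m (a - int n), pos g m (a - int n - 1)) \<in> edges G" using edge_mk[OF Suc.prems] by blast
  have "(pos g m a, pos g m (a + int n + 1)) \<in> edges G ^^ Suc n" using Suc.IH[OF Suc.prems] e1 by (blast intro: relpow_Suc_I)
  moreover have "(pos g m a, pos g m (a - int n - 1)) \<in> edges G ^^ Suc n" using Suc.IH[OF Suc.prems] e2 by (blast intro: relpow_Suc_I)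
  moreover have "a + int n + 1 = a + int (Suc n)" "a - int n - 1 = a - int (Suc n)" by simp_all
  ultimately show ?case by metis
qed

lemma dist_pos: "cyc G m g \<Longrightarrow> dist_le G (pos g m a) y t \<longleftrightarrow> (\<exists>d. real_of_int \<bar>d\<bar> \<le> t \<and> y = pos g m (a + d))"
proof
  assume c: "cyc G m g" and "dist_le G (pos g m a) y t"
  then obtain k where k: "real k \<le> t" "(pos g m a, y) \<in> edges G ^^ k" unfolding dist_le_def by blast
  obtain d where d: "\<bar>d\<bar> \<le> int k" "y = pos g m (a + d)" using pow_pos[OF c k(2)] by blast
  have "real_of_int \<bar>d\<bar> \<le> real k" using d(1) by linarith
  then show "\<exists>d. real_of_int \<bar>d\<bar> \<le> t \<and> y = pos g m (a + d)" using k(1) d(2)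
    by (intro exI[of _ d]) simp
next
  assume c: "cyc G m g" and "\<exists>d. real_of_int \<bar>d\<bar> \<le> t \<and> y = pos g m (a + d)"
  then obtain d where d: "real_of_int \<bar>d\<bar> \<le> t" "y = pos g m (a + d)" by blast
  define k where "k = nat \<bar>d\<bar>"
  have rk: "real k = real_of_int \<bar>d\<bar>" by (simp add: k_def)
  have "a + d = a + int k \<or> a + d = a - int k" by (simp add: k_def) linarith
  then have "(pos g m a, y) \<in> edges G ^^ k" using pos_pow[OF c, of a k] d(2) by auto
  then show "dist_le G (pos g m a) y t" unfolding dist_le_def using pos_verts[OF c] d(1) rk
    by (metis (no_types))
qed

lemma ball_pos: "cyc G m g \<Longrightarrow> ball G (pos g m a) r = {pos g m (a + d) | d. \<bar>d\<bar> \<le> int r}"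
proof -
  assume c: "cyc G m g"
  have "real_of_int \<bar>d\<bar> \<le> real r \<longleftrightarrow> \<bar>d\<bar> \<le> int r" for d by linarith
  then show ?thesis unfolding ball_def dist_pos[OF c] by auto
qed

lemma cyc_is_cycle: "cyc G m g \<Longrightarrow> is_cycle G"
  using is_cycle_iff by blast

lemma unique_small: "cyc G m g \<Longrightarrow> 2 * int r < int m \<Longrightarrow> \<bar>d1\<bar> \<le> int r \<Longrightarrow> \<bar>d2\<bar> \<le> int r \<Longrightarrow>
   pos g m (i + d1) = pos g m (i + d2) \<Longrightarrow> d1 = d2"
  using pos_inj_small[of G m g "i + d1" "i + d2"] by simp

lemma edge_window: "cyc G m g \<Longrightarrow> 2 * int r + 1 < int m \<Longrightarrow> \<bar>d1\<bar> \<le> int r \<Longrightarrow> \<bar>d2\<bar> \<le> int r \<Longrightarrow>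
   (pos g m (i + d1), pos g m (i + d2)) \<in> edges G \<longleftrightarrow> (d2 = d1 + 1 \<or> d2 = d1 - 1)"
proof
  assume c: "cyc G m g" and s: "2 * int r + 1 < int m" and b: "\<bar>d1\<bar> \<le> int r" "\<bar>d2\<bar> \<le> int r"
  assume "(pos g m (i + d1), pos g m (i + d2)) \<in> edges G"
  then have "pos g m (i + d2) = pos g m (i + d1 + 1) \<or> pos g m (i + d2) = pos g m (i + d1 - 1)"
    using edge_from[OF c] by blast
  then show "d2 = d1 + 1 \<or> d2 = d1 - 1"
  proof
    assume "pos g m (i + d2) = pos g m (i + d1 + 1)"
    then have "i + d2 = i + d1 + 1" using pos_inj_small[OF c, of "i + d2" "i + d1 + 1"] s b by simp
    then show ?thesis by simp
  next
    assume "pos g m (i + d2) = pos g m (i + d1 - 1)"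
    then have "i + d2 = i + d1 - 1" using pos_inj_small[OF c, of "i + d2" "i + d1 - 1"] s b by simp
    then show ?thesis by simp
  qed
next
  assume c: "cyc G m g" and "d2 = d1 + 1 \<or> d2 = d1 - 1"
  then show "(pos g m (i + d1), pos g m (i + d2)) \<in> edges G"
    using edge_mk[OF c, of "i + d1"] by (auto simp: add.assoc add_diff_eq)
qed

lemma relaxed_cong: "(\<And>u. u \<in> ball G v r \<Longrightarrow> \<mu> u = \<mu>2 u) \<Longrightarrow> relaxed r \<psi> G inp \<mu> v = relaxed r \<psi> G inp \<mu>2 v"
  unfolding relaxed_def by simp

lemma transfer_dir:
  assumes lv: "local_verifier r \<psi>" and c: "cyc G m g" and c': "cyc G' m' g'"
    and s: "2 * int r + 1 < int m" and s': "2 * int r + 1 < int m'"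
    and h: "\<And>d. \<bar>d\<bar> \<le> int r \<Longrightarrow> inp' (pos g' m' (i' + d)) = inp (pos g m (i + d)) \<and> \<mu>' (pos g' m' (i' + d)) = \<mu> (pos g m (i + d))"
    and rel: "relaxed r \<psi> G inp \<mu> (pos g m i)"
  shows "relaxed r \<psi> G' inp' \<mu>' (pos g' m' i')"
proof -
  have B: "ball G (pos g m i) r = {pos g m (i + d) | d. \<bar>d\<bar> \<le> int r}" using ball_pos[OF c] .
  have B': "ball G' (pos g' m' i') r = {pos g' m' (i' + d) | d. \<bar>d\<bar> \<le> int r}" using ball_pos[OF c'] .
  show ?thesis
  proof (cases "\<exists>u\<in>ball G (pos g m i) r. \<mu> u = None")
    case True
    then obtain d where d: "\<bar>d\<bar> \<le> int r" "\<mu> (pos g m (i + d)) = None" unfolding B by blast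
    then have "pos g' m' (i' + d) \<in> ball G' (pos g' m' i') r" "\<mu>' (pos g' m' (i' + d)) = None"
      using h[OF d(1)] unfolding B' by auto
    then show ?thesis unfolding relaxed_def by blast
  next
    case False
    then have allL: "\<forall>lam'. (\<forall>u\<in>ball G (pos g m i) r. \<mu> u = Some (lam' u)) \<longrightarrow> \<psi> G inp lam' (pos g m i)"
      using rel unfolding relaxed_def by blast
    define L where "L = (\<lambda>x. the (\<mu> x))"
    have LS: "\<forall>u\<in>ball G (pos g m i) r. \<mu> u = Some (L u)" using False unfolding L_def by auto
    have psiL: "\<psi> G inp L (pos g m i)" using allL LS by blast
    have "\<psi> G' inp' L' (pos g' m' i')" if L': "\<forall>u\<in>ball G' (pos g' m' i') r. \<mu>' u = Some (L' u)" for L'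
    proof -
      define f where "f = (\<lambda>x. pos g' m' (i' + (THE d. \<bar>d\<bar> \<le> int r \<and> x = pos g m (i + d))))"
      have fd: "f (pos g m (i + d)) = pos g' m' (i' + d)" if "\<bar>d\<bar> \<le> int r" for d
      proof -
        have "(THE e. \<bar>e\<bar> \<le> int r \<and> pos g m (i + d) = pos g m (i + e)) = d"
          using that unique_small[OF c, of r] s by (intro the_equality) auto
        then show ?thesis unfolding f_def by simp
      qed
      have inj: "inj_on f (ball G (pos g m i) r)"
      proof (rule inj_onI)
        fix x y assume "x \<in> ball G (pos g m i) r" "y \<in> ball G (pos g m i) r" "f x = f y"
        then obtain d1 d2 where "\<bar>d1\<bar> \<le> int r" "\<bar>d2\<bar> \<le> int r" "x = pos g m (i + d1)" "y = pos g m (i + d2)"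
          "pos g' m' (i' + d1) = pos g' m' (i' + d2)" unfolding B using fd by auto
        then show "x = y" using unique_small[OF c', of r] s' by auto
      qed
      have img: "f ` ball G (pos g m i) r = ball G' (pos g' m' i') r"
        unfolding B B' using fd by (auto simp: image_iff) (metis fd)
      have f0: "f (pos g m i) = pos g' m' i'" using fd[of 0] by simp
      have E: "(x, y) \<in> edges G \<longleftrightarrow> (f x, f y) \<in> edges G'"
        if xy: "x \<in> ball G (pos g m i) r" "y \<in> ball G (pos g m i) r" for x y
      proof -
        obtain d1 d2 where d: "\<bar>d1\<bar> \<le> int r" "\<bar>d2\<bar> \<le> int r" "x = pos g m (i + d1)" "y = pos g m (i + d2)"
          using xy unfolding B by auto
        show ?thesis
          using d fd edge_window[OF c s] edge_window[OF c' s'] by simp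
      qed
      have Lab: "inp' (f x) = inp x \<and> L' (f x) = L x" if xb: "x \<in> ball G (pos g m i) r" for x
      proof -
        obtain d where d: "\<bar>d\<bar> \<le> int r" "x = pos g m (i + d)" using xb unfolding B by auto
        have "pos g' m' (i' + d) \<in> ball G' (pos g' m' i') r" unfolding B' using d by auto
        then have "\<mu>' (pos g' m' (i' + d)) = Some (L' (pos g' m' (i' + d)))" using L' by blast
        then show ?thesis
          using h[OF d(1)] fd[OF d(1)] d(2) unfolding L_def by simp
      qed
      have iso: "ball_iso r G inp L (pos g m i) G' inp' L' (pos g' m' i') f"
        unfolding ball_iso_def using inj img f0 E Lab by (simp add: bij_betw_def)
      have "is_cycle G" "is_cycle G'" using c c' by (simp_all add: cyc_is_cycle)
      moreover have "pos g m i \<in> verts G" "pos g' m' i' \<in> verts G'" using pos_verts c c' by blast+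
      ultimately have "\<psi> G inp L (pos g m i) = \<psi> G' inp' L' (pos g' m' i')"
        using lv iso unfolding local_verifier_def by blast
      then show ?thesis using psiL by simp
    qed
    then show ?thesis unfolding relaxed_def by blast
  qed
qed

lemma mend_mono: "is_mend r \<psi> G inp lam v t \<mu> \<Longrightarrow> t \<le> t' \<Longrightarrow> is_mend r \<psi> G inp lam v t' \<mu>"
  unfolding is_mend_def dist_le_def by force

definition G0 :: "nat \<Rightarrow> graph" where
  "G0 n = ({0..<n}, {(i, Suc i mod n) | i. i < n} \<union> {(Suc i mod n, i) | i. i < n})"

lemma cyc_G0: "n \<ge> 3 \<Longrightarrow> cyc (G0 n) n id"
  unfolding cyc_def G0_def verts_def edges_def by simp

lemma card_G0: "card (verts (G0 n)) = n"
  unfolding G0_def verts_def by simp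

lemma shift_eq: "cyc G m g \<Longrightarrow> pos g m (a + d) = pos g m (a + s + e) \<Longrightarrow> pos g m (a + s) = pos g m (a + (d - e))"
proof -
  assume c: "cyc G m g" and h: "pos g m (a + d) = pos g m (a + s + e)"
  have "(a + d) mod int m = (a + s + e) mod int m" using pos_eq_mod[OF c h] .
  then have "(a + d + (- e)) mod int m = (a + s + e + (- e)) mod int m" by (rule mod_shift)
  then have "(a + (d - e)) mod int m = (a + s) mod int m" by (simp add: algebra_simps)
  then show ?thesis using pos_cong by metis
qed

lemma big_mend:
  assumes lv: "local_verifier r \<psi>" and mv: "mendable_verifier r \<psi> T"
    and n0: "n0 \<ge> 3" and K: "T n0 \<le> real K" and R: "R = K + 2 * r" and Rn0: "2 * R + 2 < n0"
    and c: "cyc G m g" and Rm: "2 * R + 1 < m"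
    and acc: "accepts_relaxed r \<psi> G inp lam" and v: "v \<in> verts G"
  shows "\<exists>\<mu>. is_mend r \<psi> G inp lam v (T n0) \<mu>"
proof -
  define P where "P = pos g m"
  define Q where "Q = pos id n0"
  have c0: "cyc (G0 n0) n0 id" using cyc_G0[OF n0] .
  obtain a where a: "v = P a" using verts_pos[OF c v, of 0] unfolding P_def by auto
  have sR: "2 * int R < int n0" "2 * int R < int m" using Rn0 Rm by linarith+
  have sr: "2 * int r + 1 < int n0" "2 * int r + 1 < int m" using Rn0 Rm R by linarith+
  define W' where "W' = {Q d | d. \<bar>d\<bar> \<le> int R}"
  define DQ where "DQ = (\<lambda>x. THE d. \<bar>d\<bar> \<le> int R \<and> x = Q d)"
  have DQ: "DQ (Q d) = d" if "\<bar>d\<bar> \<le> int R" for d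
    unfolding DQ_def using that unique_small[OF c0 sR(1), of _ _ 0] unfolding Q_def
    by (intro the_equality) auto
  define lam' where "lam' = (\<lambda>x. if x \<in> W' then lam (P (a + DQ x)) else None)"
  define inp' where "inp' = (\<lambda>x. if x \<in> W' then inp (P (a + DQ x)) else inp v)"
  have lamQ: "lam' (Q d) = lam (P (a + d)) \<and> inp' (Q d) = inp (P (a + d))" if "\<bar>d\<bar> \<le> int R" for d
    using that DQ[OF that] unfolding lam'_def inp'_def W'_def by auto
  have notW': "Q d \<notin> W'" if "\<bar>d\<bar> = int R + 1" for d
  proof
    assume "Q d \<in> W'"
    then obtain e where e: "\<bar>e\<bar> \<le> int R" "Q d = Q e" unfolding W'_def by auto
    have "\<bar>d - e\<bar> < int n0" using e(1) that Rn0 by linarith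
    then have "d = e" using pos_inj_small[OF c0] e(2) unfolding Q_def by blast
    then show False using that e(1) by simp
  qed
  have acc': "accepts_relaxed r \<psi> (G0 n0) inp' lam'"
    unfolding accepts_relaxed_def
  proof
    fix x assume "x \<in> verts (G0 n0)"
    then obtain s where xs: "x = Q s" using verts_pos[OF c0, of x 0] unfolding Q_def by auto
    have Bx: "ball (G0 n0) (Q s) r = {Q (s + e) | e. \<bar>e\<bar> \<le> int r}" using ball_pos[OF c0] unfolding Q_def .
    show "relaxed r \<psi> (G0 n0) inp' lam' x"
    proof (cases "x \<in> W'")
      case False
      then have "lam' x = None" unfolding lam'_def by simp
      moreover have "x \<in> ball (G0 n0) (Q s) r" unfolding Bx xs by (intro CollectI exI[of _ 0]) simp
      ultimately show ?thesis unfolding relaxed_def xs by blast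
    next
      case True
      then obtain d where d: "\<bar>d\<bar> \<le> int R" "x = Q d" unfolding W'_def by auto
      have Bd: "ball (G0 n0) (Q d) r = {Q (d + e) | e. \<bar>e\<bar> \<le> int r}" using ball_pos[OF c0] unfolding Q_def .
      consider "\<bar>d\<bar> \<le> int R - int r" | "d > int R - int r" | "d < - (int R - int r)" by linarith
      then show ?thesis
      proof cases
        case 1
        have "relaxed r \<psi> G inp lam (P (a + d))" using acc pos_verts[OF c] unfolding accepts_relaxed_def P_def by blast
        moreover have "inp' (Q (d + e)) = inp (P (a + d + e)) \<and> lam' (Q (d + e)) = lam (P (a + d + e))"
          if "\<bar>e\<bar> \<le> int r" for e
          using lamQ[of "d + e"] 1 that by (simp add: add.assoc)
        ultimately have "relaxed r \<psi> (G0 n0) inp' lam' (Q (0 + d))"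
          using transfer_dir[OF lv c c0 sr(2) sr(1), where i="a + d" and i'=d and inp=inp and inp'=inp' and \<mu>=lam and \<mu>'=lam'] unfolding P_def Q_def by auto
        then show ?thesis using d by simp
      next
        case 2
        have "Q (int R + 1) \<in> ball (G0 n0) (Q d) r" unfolding Bd
          using 2 d by (intro CollectI exI[of _ "int R + 1 - d"]) auto
        moreover have "lam' (Q (int R + 1)) = None" using notW'[of "int R + 1"] unfolding lam'_def by simp
        ultimately show ?thesis unfolding relaxed_def d by blast
      next
        case 3
        have "Q (- int R - 1) \<in> ball (G0 n0) (Q d) r" unfolding Bd
          using 3 d by (intro CollectI exI[of _ "- int R - 1 - d"]) auto
        moreover have "lam' (Q (- int R - 1)) = None" using notW'[of "- int R - 1"] unfolding lam'_def by simp
        ultimately show ?thesis unfolding relaxed_def d by blast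
      qed
    qed
  qed
  have Q0: "Q 0 \<in> verts (G0 n0)" using pos_verts[OF c0] unfolding Q_def by blast
  obtain \<mu>' where mu': "is_mend r \<psi> (G0 n0) inp' lam' (Q 0) (T n0) \<mu>'"
    using mv acc' Q0 cyc_is_cycle[OF c0] card_G0[of n0] unfolding mendable_verifier_def by metis
  define W where "W = {P (a + d) | d. \<bar>d\<bar> \<le> int R}"
  define DP where "DP = (\<lambda>x. THE d. \<bar>d\<bar> \<le> int R \<and> x = P (a + d))"
  have DP: "DP (P (a + d)) = d" if "\<bar>d\<bar> \<le> int R" for d
    unfolding DP_def using that unique_small[OF c sR(2), of _ _ a] unfolding P_def
    by (intro the_equality) auto
  define \<mu> where "\<mu> = (\<lambda>x. if x \<in> W then \<mu>' (Q (DP x)) else lam x)"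
  have muP: "\<mu> (P (a + d)) = \<mu>' (Q d)" if "\<bar>d\<bar> \<le> int R" for d
    using that DP[OF that] unfolding \<mu>_def W_def by auto
  have chg: "\<exists>d. \<bar>d\<bar> \<le> int K \<and> real_of_int \<bar>d\<bar> \<le> T n0 \<and> u = P (a + d)" if "\<mu> u \<noteq> lam u" for u
  proof -
    have "u \<in> W" using that unfolding \<mu>_def by (cases "u \<in> W") simp_all
    then obtain d where d: "\<bar>d\<bar> \<le> int R" "u = P (a + d)" unfolding W_def by auto
    have "\<mu>' (Q d) \<noteq> lam' (Q d)" using that muP[OF d(1)] lamQ[OF d(1)] d(2) by simp
    moreover have "Q d \<in> verts (G0 n0)" using pos_verts[OF c0] unfolding Q_def by blast
    ultimately have "dist_le (G0 n0) (Q 0) (Q d) (T n0)" using mu' unfolding is_mend_def by blast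
    then obtain e where e: "real_of_int \<bar>e\<bar> \<le> T n0" "Q d = Q (0 + e)" using dist_pos[OF c0] unfolding Q_def by blast
    have eK: "\<bar>e\<bar> \<le> int K" using e(1) K by linarith
    then have "\<bar>e\<bar> \<le> int R" using R by linarith
    then have "d = e" using unique_small[OF c0 sR(1) d(1), of e 0] e(2) unfolding Q_def by simp
    then show ?thesis using eK e(1) d(2) by blast
  qed
  have m1: "accepts_relaxed r \<psi> G inp \<mu>"
    unfolding accepts_relaxed_def
  proof
    fix w assume w: "w \<in> verts G"
    obtain s where ws: "w = P (a + s)" using verts_pos[OF c w, of a] unfolding P_def by auto
    have Bw: "ball G (P (a + s)) r = {P (a + s + e) | e. \<bar>e\<bar> \<le> int r}" using ball_pos[OF c] unfolding P_def .
    show "relaxed r \<psi> G inp \<mu> w"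
    proof (cases "\<forall>y\<in>ball G w r. \<mu> y = lam y")
      case True
      then show ?thesis using relaxed_cong[of G w r \<mu> lam] acc w unfolding accepts_relaxed_def by auto
    next
      case False
      then obtain y where y: "y \<in> ball G w r" "\<mu> y \<noteq> lam y" by blast
      obtain d where d: "\<bar>d\<bar> \<le> int K" "y = P (a + d)" using chg[OF y(2)] by blast
      obtain e where e: "\<bar>e\<bar> \<le> int r" "y = P (a + s + e)" using y(1) unfolding ws Bw by auto
      have ws': "w = P (a + (d - e))" using shift_eq[OF c, of a d s e] d(2) e(2) ws unfolding P_def by simp
      define s' where "s' = d - e"
      have s'b: "\<bar>s'\<bar> \<le> int R - int r" using d(1) e(1) R unfolding s'_def by linarith
      have "relaxed r \<psi> (G0 n0) inp' \<mu>' (Q s')" using mu' pos_verts[OF c0] unfolding is_mend_def accepts_relaxed_def Q_def by blast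
      moreover have "inp (P (a + s' + e')) = inp' (Q (s' + e')) \<and> \<mu> (P (a + s' + e')) = \<mu>' (Q (s' + e'))"
        if "\<bar>e'\<bar> \<le> int r" for e'
        using lamQ[of "s' + e'"] muP[of "s' + e'"] s'b that by (simp add: add.assoc)
      ultimately have "relaxed r \<psi> G inp \<mu> (P (a + s'))"
        using transfer_dir[OF lv c0 c sr(1) sr(2), where i=s' and i'="a + s'" and inp=inp' and inp'=inp and \<mu>=\<mu>' and \<mu>'=\<mu>] unfolding P_def Q_def by auto
      then show ?thesis using ws' unfolding s'_def by simp
    qed
  qed
  have m2: "\<mu> v \<noteq> None" using muP[of 0] mu' a unfolding is_mend_def by simp
  have m3: "lam u = None" if "u \<in> verts G" "\<mu> u = None" for u
  proof (cases "u \<in> W")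
    case True
    then obtain d where d: "\<bar>d\<bar> \<le> int R" "u = P (a + d)" unfolding W_def by auto
    have "Q d \<in> verts (G0 n0)" using pos_verts[OF c0] unfolding Q_def by blast
    then have "lam' (Q d) = None" using mu' that(2) muP[OF d(1)] d(2) unfolding is_mend_def by auto
    then show ?thesis using lamQ[OF d(1)] d(2) by simp
  next
    case False
    then show ?thesis using that unfolding \<mu>_def by simp
  qed
  have m4: "dist_le G v u (T n0)" if ne: "\<mu> u \<noteq> lam u" for u
  proof -
    obtain d where "real_of_int \<bar>d\<bar> \<le> T n0" "u = P (a + d)" using chg[OF ne] by blast
    then show ?thesis using dist_pos[OF c] a unfolding P_def by blast
  qed
  have "is_mend r \<psi> G inp lam v (T n0) \<mu>" unfolding is_mend_def using m1 m2 m3 m4 by blast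
  then show ?thesis by blast
qed

theorem corollary8p2:
  fixes \<Pi> :: "('i::finite, 'o::finite) problem" and T :: "nat \<Rightarrow> real"
  assumes "is_LCL \<Pi>"
    and "problem_mendable \<Pi> T"
    and "T \<in> o(\<lambda>n. real n)"
  shows "\<exists>c::real. problem_mendable \<Pi> (\<lambda>_. c)"
proof -
  obtain r \<psi> where vf: "verifier_for r \<psi> \<Pi>" and mv: "mendable_verifier r \<psi> T"
    using assms(2) unfolding problem_mendable_def by blast
  have lv: "local_verifier r \<psi>" using vf unfolding verifier_for_def by blast
  have "eventually (\<lambda>n. norm (T n) \<le> (1/4) * norm (real n)) at_top"
    using landau_o.smallD[OF assms(3), of "1/4"] by simp
  then obtain N where N: "\<And>n. n \<ge> N \<Longrightarrow> norm (T n) \<le> (1/4) * norm (real n)"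
    unfolding eventually_at_top_linorder by blast
  define n0 where "n0 = N + 8 * r + 9"
  have Tn0: "\<bar>T n0\<bar> \<le> real n0 / 4" using N[of n0] unfolding n0_def by simp
  define K where "K = nat \<lceil>T n0\<rceil>"
  have K1: "T n0 \<le> real K" unfolding K_def by linarith
  have K2: "real K \<le> real n0 / 4 + 1" unfolding K_def using Tn0 by linarith
  define R where "R = K + 2 * r"
  have Rn0: "2 * R + 2 < n0"
  proof -
    have e1: "real (2 * R + 2) = 2 * real K + 4 * real r + 2" unfolding R_def by simp
    have e2: "real n0 = real N + 8 * real r + 9" unfolding n0_def by simp
    have "real (2 * R + 2) < real n0" using K2 e1 e2 of_nat_0_le_iff[of N] by linarith
    then show ?thesis by linarith
  qed
  have n03: "n0 \<ge> 3" unfolding n0_def by simp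
  define c where "c = max (T n0) (Max (T ` {..2 * R + 1}))"
  have "mendable_verifier r \<psi> (\<lambda>_. c)"
    unfolding mendable_verifier_def
  proof (intro allI impI)
    fix G inp lam v
    assume h: "is_cycle G \<and> accepts_relaxed r \<psi> G inp lam \<and> v \<in> verts G"
    then obtain m g where cg: "cyc G m g" using is_cycle_cyc by blast
    show "\<exists>\<mu>. is_mend r \<psi> G inp lam v c \<mu>"
    proof (cases "2 * R + 1 < m")
      case True
      obtain \<mu> where "is_mend r \<psi> G inp lam v (T n0) \<mu>"
        using big_mend[OF lv mv n03 K1 R_def Rn0 cg True] h by blast
      moreover have "T n0 \<le> c" unfolding c_def by simp
      ultimately show ?thesis using mend_mono by blast
    next
      case False
      obtain \<mu> where "is_mend r \<psi> G inp lam v (T m) \<mu>"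
        using mv h cyc_card[OF cg] unfolding mendable_verifier_def by metis
      moreover have "T m \<le> Max (T ` {..2 * R + 1})" using False by (intro Max_ge) auto
      then have "T m \<le> c" unfolding c_def by simp
      ultimately show ?thesis using mend_mono by blast
    qed
  qed
  then show ?thesis using vf unfolding problem_mendable_def by blast
qed

end
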